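(* Let $G=(V,E)$ be a finite digraph without loops in which every vertex has at least one incoming arc and at least one outgoing arc, and let $p$ be a positive integer. Then $G$ has a directed path-decomposition of width at most $p-1$ if and only if there is a processing of the queue system $Q_G$ with at most $p$ stack-up places.
   Context: A bin $b$ carries a pallet symbol $\mathit{plt}(b)$. For $G=(V,E)$ with $E=\{e_1,\ldots,e_l\}$, the queue system $Q_G=(q_1,\ldots,q_l)$ consists of sequences $q_i=(b_{2i-1},b_{2i})$ of two new distinct bins with $(\mathit{plt}(b_{2i-1}),\mathit{plt}(b_{2i}))=e_i$. For a list $Q=(q_1,\ldots,q_k)$ of sequences of pairwise distinct bins: a subsequence of $q=(b_1,\ldots,b_n)$ is a suffix $q'=(b_j,\ldots,b_n)$ (possibly empty) and $q-q'=(b_1,\ldots,b_{j-1})$; a configuration is $(Q,Q')$ with $Q'=(q'_1,\ldots,q'_k)$, $q'_j$ a subsequence of $q_j$; pallet $t$ is open in $(Q,Q')$ if some bin for $t$ lies in some $q'_i$ and some bin for $t$ lies in some $q_j-q'_j$. A transformation step removes the first bin of one nonempty $q'_i$; a processing is a sequence of transformation steps from $(Q,Q)$ to the configuration with all sequences empty; it uses at most $p$ stack-up places if every configuration along it has at most $p$ open pallets. A directed path-decomposition of $G$ is a sequence $(X_1,\ldots,X_r)$ of subsets of $V$ with: (1) $\bigcup_i X_i=V$; (2) for each arc $(u,v)$ there are $i\le j$ with $u\in X_i$, $v\in X_j$; (3) if $u\in X_i\cap X_j$, $i\le j$, then $u\in X_l$ for all $i\le l\le j$. Its width is $\max_i|X_i|-1$.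 *)

theory Defs
  imports Main
begin

text \<open>A configuration (Q,Q') is represented by the list c of the numbers of bins already removed
  from each sequence: the subsequence (suffix) q'_i is drop (c!i) (Q!i), and q_i - q'_i is
  take (c!i) (Q!i).\<close>

definition is_config :: "'b list list \<Rightarrow> nat list \<Rightarrow> bool" where
  "is_config Q c \<longleftrightarrow> length c = length Q \<and> (\<forall>i<length Q. c ! i \<le> length (Q ! i))"

definition pallet_open :: "('b \<Rightarrow> 'c) \<Rightarrow> 'b list list \<Rightarrow> nat list \<Rightarrow> 'c \<Rightarrow> bool" where
  "pallet_open plt Q c t \<longleftrightarrow>
     (\<exists>i<length Q. \<exists>b\<in>set (drop (c ! i) (Q ! i)). plt b = t) \<and>
     (\<exists>j<length Q. \<exists>b\<in>set (take (c ! j) (Q ! j)). plt b = t)"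

definition open_pallets :: "('b \<Rightarrow> 'c) \<Rightarrow> 'b list list \<Rightarrow> nat list \<Rightarrow> 'c set" where
  "open_pallets plt Q c = {t. pallet_open plt Q c t}"

definition trans_step :: "'b list list \<Rightarrow> nat list \<Rightarrow> nat list \<Rightarrow> bool" where
  "trans_step Q c c' \<longleftrightarrow> (\<exists>i<length Q. c ! i < length (Q ! i) \<and> c' = c[i := Suc (c ! i)])"

definition is_processing :: "'b list list \<Rightarrow> nat list list \<Rightarrow> bool" where
  "is_processing Q cs \<longleftrightarrow> cs \<noteq> [] \<and>
     hd cs = replicate (length Q) 0 \<and> last cs = map length Q \<and>
     (\<forall>c\<in>set cs. is_config Q c) \<and>
     (\<forall>k. Suc k < length cs \<longrightarrow> trans_step Q (cs ! k) (cs ! Suc k))"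

definition uses_at_most :: "('b \<Rightarrow> 'c) \<Rightarrow> 'b list list \<Rightarrow> nat list list \<Rightarrow> nat \<Rightarrow> bool" where
  "uses_at_most plt Q cs p \<longleftrightarrow> (\<forall>c\<in>set cs. card (open_pallets plt Q c) \<le> p)"

text \<open>For an enumeration es = [e_1,...,e_l] of the arcs, the bins are (i,0),(i,1) for i < l
  (pairwise distinct), q_i = [(i,0),(i,1)] and the pallet symbols are the endpoints of e_i.\<close>

definition QG_queues :: "('a \<times> 'a) list \<Rightarrow> (nat \<times> nat) list list" where
  "QG_queues es = map (\<lambda>i. [(i, 0), (i, 1)]) [0..<length es]"

definition QG_plt :: "('a \<times> 'a) list \<Rightarrow> nat \<times> nat \<Rightarrow> 'a" where
  "QG_plt es b = (if snd b = 0 then fst (es ! fst b) else snd (es ! fst b))"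

definition directed_path_decomposition :: "'a set \<Rightarrow> ('a \<times> 'a) set \<Rightarrow> 'a set list \<Rightarrow> bool" where
  "directed_path_decomposition V E Xs \<longleftrightarrow>
     Xs \<noteq> [] \<and> (\<forall>X\<in>set Xs. X \<subseteq> V) \<and>
     \<Union>(set Xs) = V \<and>
     (\<forall>(u, v)\<in>E. \<exists>i j. i \<le> j \<and> j < length Xs \<and> u \<in> Xs ! i \<and> v \<in> Xs ! j) \<and>
     (\<forall>u i j l. i \<le> l \<and> l \<le> j \<and> j < length Xs \<and> u \<in> Xs ! i \<and> u \<in> Xs ! j \<longrightarrow> u \<in> Xs ! l)"

definition dpd_width :: "'a set list \<Rightarrow> int" where
  "dpd_width Xs = int (Max (card ` set Xs)) - 1"

end

theory Submission imports Defs begin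

definition Bset :: "('a\<times>'a) list \<Rightarrow> (nat\<times>nat) set" where
  "Bset es = {(i,k). i < length es \<and> k < 2}"
definition rem :: "('a\<times>'a) list \<Rightarrow> nat list \<Rightarrow> (nat\<times>nat) set" where
  "rem es c = {(i,k). i < length es \<and> k < c!i}"

lemma QG_len[simp]: "length (QG_queues es) = length es"
  by (simp add: QG_queues_def)
lemma QG_nth[simp]: "i < length es \<Longrightarrow> QG_queues es ! i = [(i,0),(i,1)]"
  by (simp add: QG_queues_def)

lemma take2: "(n::nat) \<le> 2 \<Longrightarrow> b \<in> set (take n [(i::nat,0::nat),(i,1)]) \<longleftrightarrow> (\<exists>k. b = (i,k) \<and> k < n)"
  by (cases "n = 0 \<or> n = 1 \<or> n = 2") (auto simp: less_Suc_eq)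
lemma drop2: "(n::nat) \<le> 2 \<Longrightarrow> b \<in> set (drop n [(i::nat,0::nat),(i,1)]) \<longleftrightarrow> (\<exists>k. b = (i,k) \<and> n \<le> k \<and> k < 2)"
  by (cases "n = 0 \<or> n = 1 \<or> n = 2") (auto simp: less_Suc_eq)

lemma is_config_QG: "is_config (QG_queues es) c \<longleftrightarrow> length c = length es \<and> (\<forall>i<length es. c!i \<le> 2)"
  by (simp add: is_config_def numeral_2_eq_2)

lemma open_char:
  assumes "is_config (QG_queues es) c"
  shows "pallet_open (QG_plt es) (QG_queues es) c t \<longleftrightarrow>
    (\<exists>b\<in>Bset es - rem es c. QG_plt es b = t) \<and> (\<exists>b\<in>rem es c. QG_plt es b = t)"
proof -
  have c2: "\<And>i. i < length es \<Longrightarrow> c!i \<le> 2" using assms by (simp add: is_config_QG)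
  have dm: "\<And>i b. i < length es \<Longrightarrow> b \<in> set (drop (c ! i) (QG_queues es ! i)) \<longleftrightarrow> b \<in> Bset es - rem es c \<and> fst b = i"
    using c2 drop2 by (force simp: Bset_def rem_def)
  have tm: "\<And>i b. i < length es \<Longrightarrow> b \<in> set (take (c ! i) (QG_queues es ! i)) \<longleftrightarrow> b \<in> rem es c \<and> fst b = i"
    using c2 take2 by (force simp: rem_def)
  have A: "(\<exists>i<length es. \<exists>b\<in>set (drop (c ! i) (QG_queues es ! i)). QG_plt es b = t) \<longleftrightarrow>
     (\<exists>b\<in>Bset es - rem es c. QG_plt es b = t)"
  proof
    assume "\<exists>i<length es. \<exists>b\<in>set (drop (c ! i) (QG_queues es ! i)). QG_plt es b = t"
    then show "\<exists>b\<in>Bset es - rem es c. QG_plt es b = t" using dm by blast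
  next
    assume "\<exists>b\<in>Bset es - rem es c. QG_plt es b = t"
    then obtain b where b: "b \<in> Bset es - rem es c" "QG_plt es b = t" by blast
    then have "fst b < length es" by (auto simp: Bset_def)
    then show "\<exists>i<length es. \<exists>b\<in>set (drop (c ! i) (QG_queues es ! i)). QG_plt es b = t"
      using dm b by blast
  qed
  have B: "(\<exists>i<length es. \<exists>b\<in>set (take (c ! i) (QG_queues es ! i)). QG_plt es b = t) \<longleftrightarrow>
     (\<exists>b\<in>rem es c. QG_plt es b = t)"
  proof
    assume "\<exists>i<length es. \<exists>b\<in>set (take (c ! i) (QG_queues es ! i)). QG_plt es b = t"
    then show "\<exists>b\<in>rem es c. QG_plt es b = t" using tm by blast
  next
    assume "\<exists>b\<in>rem es c. QG_plt es b = t"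
    then obtain b where b: "b \<in> rem es c" "QG_plt es b = t" by blast
    then have "fst b < length es" by (auto simp: rem_def)
    then show "\<exists>i<length es. \<exists>b\<in>set (take (c ! i) (QG_queues es ! i)). QG_plt es b = t"
      using tm b by blast
  qed
  show ?thesis unfolding pallet_open_def using A B by simp
qed

lemma fwd_open:
  assumes R0: "R 0 = {}"
    and step: "\<And>k. Suc k < n \<Longrightarrow> \<exists>x. R (Suc k) = insert x (R k)"
    and sub: "\<And>k. k < n \<Longrightarrow> R k \<subseteq> B"
    and two: "b1 \<in> B" "b2 \<in> B" "b1 \<noteq> b2" "f b1 = v" "f b2 = v"
  shows "m < n \<Longrightarrow> b \<in> R m \<Longrightarrow> f b = v \<Longrightarrow>
     \<exists>k\<le>m. (\<exists>b\<in>B - R k. f b = v) \<and> (\<exists>b\<in>R k. f b = v)"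
proof (induction m arbitrary: b)
  case 0 then show ?case using R0 by simp
next
  case (Suc m)
  show ?case
  proof (cases "\<exists>b'\<in>R m. f b' = v")
    case True
    then obtain b' where "b' \<in> R m" "f b' = v" by blast
    with Suc.IH[of b'] Suc.prems(1) obtain k where "k \<le> m"
      "(\<exists>b\<in>B - R k. f b = v) \<and> (\<exists>b\<in>R k. f b = v)" by auto
    then show ?thesis by (intro exI[of _ k]) auto
  next
    case False
    obtain x where Rx: "R (Suc m) = insert x (R m)" using step Suc.prems(1) by blast
    have "b1 \<notin> R (Suc m) \<or> b2 \<notin> R (Suc m)"
      using Rx False two by auto
    then have "\<exists>b\<in>B - R (Suc m). f b = v" using two by auto
    then show ?thesis using Suc.prems by blast
  qed
qed

lemma bwd_open:
  assumes Rl: "R (n - 1) = B" and n: "n > 0"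
    and step: "\<And>k. Suc k < n \<Longrightarrow> \<exists>x. R (Suc k) = insert x (R k)"
    and two: "b1 \<in> B" "b2 \<in> B" "b1 \<noteq> b2" "f b1 = v" "f b2 = v"
  shows "d + m = n - 1 \<Longrightarrow> b \<in> B - R m \<Longrightarrow> f b = v \<Longrightarrow>
     \<exists>k. m \<le> k \<and> k < n \<and> (\<exists>b\<in>B - R k. f b = v) \<and> (\<exists>b\<in>R k. f b = v)"
proof (induction d arbitrary: m b)
  case 0 then show ?case using Rl by simp
next
  case (Suc d)
  show ?case
  proof (cases "\<exists>b'\<in>B - R (Suc m). f b' = v")
    case True
    then obtain b' where "b' \<in> B - R (Suc m)" "f b' = v" by blast
    with Suc.IH[of "Suc m" b'] Suc.prems(1) obtain k where "Suc m \<le> k" "k < n"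
      "(\<exists>b\<in>B - R k. f b = v) \<and> (\<exists>b\<in>R k. f b = v)" by auto
    then show ?thesis by (intro exI[of _ k]) auto
  next
    case False
    obtain x where Rx: "R (Suc m) = insert x (R m)" using step Suc.prems(1) n by fastforce
    have "b1 \<in> R m \<or> b2 \<in> R m"
      using Rx False two by auto
    then have "\<exists>b\<in>R m. f b = v" using two by auto
    then show ?thesis using Suc.prems by (intro exI[of _ m]) auto
  qed
qed

lemma mono_R:
  assumes step: "\<And>k. Suc k < n \<Longrightarrow> \<exists>x. R (Suc k) = insert x (R k)"
  shows "i \<le> j \<Longrightarrow> j < n \<Longrightarrow> R i \<subseteq> R j"
proof (induction j)
  case 0 then show ?case by simp
next
  case (Suc j)
  show ?case
  proof (cases "i = Suc j")
    case False
    then have "R i \<subseteq> R j" using Suc by auto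
    moreover obtain x where "R (Suc j) = insert x (R j)" using step Suc.prems by blast
    ultimately show ?thesis by auto
  qed simp
qed

lemma first_idx:
  assumes R0: "R 0 = {}"
    and step: "\<And>k. Suc k < n \<Longrightarrow> \<exists>x. R (Suc k) = insert x (R k)"
    and pre: "\<And>k. k < n \<Longrightarrow> bo \<in> R k \<Longrightarrow> bz \<in> R k"
    and ne: "bz \<noteq> bo"
  shows "m < n \<Longrightarrow> bo \<in> R m \<Longrightarrow> \<exists>k<m. bz \<in> R k \<and> bo \<notin> R k"
proof (induction m)
  case 0 then show ?case using R0 by simp
next
  case (Suc m)
  show ?case
  proof (cases "bo \<in> R m")
    case True then show ?thesis using Suc by (meson Suc_lessD less_SucI)
  next
    case False
    obtain x where Rx: "R (Suc m) = insert x (R m)" using step Suc.prems by blast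
    have "bz \<in> R (Suc m)" using pre Suc.prems by blast
    then have "bz \<in> R m" using Rx False Suc.prems ne by auto
    then show ?thesis using False by blast
  qed
qed

lemma rem0: "rem es (replicate (length es) 0) = {}"
  by (auto simp: rem_def)
lemma rem_last: "rem es (map length (QG_queues es)) = Bset es"
  by (auto simp: rem_def Bset_def QG_queues_def numeral_2_eq_2)
lemma rem_sub: "is_config (QG_queues es) c \<Longrightarrow> rem es c \<subseteq> Bset es"
  by (force simp: rem_def Bset_def is_config_QG)
lemma rem_step: "length c = length es \<Longrightarrow> i < length es \<Longrightarrow>
   rem es (c[i := Suc (c!i)]) = insert (i, c!i) (rem es c)"
  by (auto simp: rem_def nth_list_update split: if_splits)
lemma rem_pre: "(i, 1) \<in> rem es c \<Longrightarrow> (i, 0) \<in> rem es c"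
  by (auto simp: rem_def)
lemma plt0[simp]: "QG_plt es (i, 0) = fst (es ! i)"
  by (simp add: QG_plt_def)
lemma plt1[simp]: "k \<noteq> 0 \<Longrightarrow> QG_plt es (i, k) = snd (es ! i)"
  by (simp add: QG_plt_def)

lemma two_bins:
  assumes "\<forall>v\<in>V. (\<exists>u. (u, v) \<in> E) \<and> (\<exists>w. (v, w) \<in> E)" "set es = E" "v \<in> V"
  shows "\<exists>b1 b2. b1 \<in> Bset es \<and> b2 \<in> Bset es \<and> b1 \<noteq> b2 \<and> QG_plt es b1 = v \<and> QG_plt es b2 = v"
proof -
  obtain u w where "(u, v) \<in> E" "(v, w) \<in> E" using assms by blast
  then obtain i j where i: "i < length es" "es ! i = (v, w)" and j: "j < length es" "es ! j = (u, v)"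
    using assms(2) by (metis in_set_conv_nth)
  show ?thesis
    by (rule exI[of _ "(i,0)"], rule exI[of _ "(j,1)"]) (use i j in \<open>auto simp: Bset_def\<close>)
qed

lemma plt_in_V:
  assumes "E \<subseteq> V \<times> V" "set es = E" "b \<in> Bset es"
  shows "QG_plt es b \<in> V"
proof -
  obtain i k where b: "b = (i,k)" "i < length es" using assms(3) by (auto simp: Bset_def)
  then have "es ! i \<in> E" using assms(2) by auto
  then show ?thesis using assms(1) b by (cases "k = 0") auto
qed

lemma dir1:
  assumes EV: "E \<subseteq> V \<times> V" and deg: "\<forall>v\<in>V. (\<exists>u. (u, v) \<in> E) \<and> (\<exists>w. (v, w) \<in> E)"
    and es: "set es = E"
    and P: "is_processing (QG_queues es) cs" and U: "uses_at_most (QG_plt es) (QG_queues es) cs p"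
  shows "\<exists>Xs. directed_path_decomposition V E Xs \<and> dpd_width Xs \<le> int p - 1"
proof -
  define n where "n = length cs"
  define R where "R k = rem es (cs ! k)" for k
  define B where "B = Bset es"
  define f where "f = QG_plt es"
  define Xs where "Xs = map (open_pallets f (QG_queues es)) cs"
  have ne: "cs \<noteq> []" and hd: "hd cs = replicate (length es) 0" and lst: "last cs = map length (QG_queues es)"
    and cfg: "\<And>c. c \<in> set cs \<Longrightarrow> is_config (QG_queues es) c"
    and st: "\<And>k. Suc k < n \<Longrightarrow> trans_step (QG_queues es) (cs ! k) (cs ! Suc k)"
    using P by (auto simp: is_processing_def n_def)
  have n0: "n > 0" using ne by (simp add: n_def)
  have cfgk: "\<And>k. k < n \<Longrightarrow> is_config (QG_queues es) (cs ! k)" using cfg by (simp add: n_def)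
  have R0: "R 0 = {}" using hd ne rem0 by (simp add: R_def hd_conv_nth)
  have Rl: "R (n - 1) = B" using lst ne rem_last by (simp add: R_def B_def n_def last_conv_nth)
  have sub: "\<And>k. k < n \<Longrightarrow> R k \<subseteq> B" unfolding R_def B_def using cfgk rem_sub by blast
  have step: "\<And>k. Suc k < n \<Longrightarrow> \<exists>x. R (Suc k) = insert x (R k)"
  proof -
    fix k assume k: "Suc k < n"
    then obtain i where i: "i < length es" "cs ! Suc k = (cs ! k)[i := Suc (cs ! k ! i)]"
      using st[OF k] by (auto simp: trans_step_def)
    have "length (cs ! k) = length es" using cfgk[of k] k by (simp add: is_config_QG)
    then have "R (Suc k) = insert (i, cs ! k ! i) (R k)" using i rem_step[of "cs ! k" es i] by (simp add: R_def)
    then show "\<exists>x. R (Suc k) = insert x (R k)" by blast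
  qed
  have pre: "\<And>k i. k < n \<Longrightarrow> (i, 1) \<in> R k \<Longrightarrow> (i, 0) \<in> R k"
    using rem_pre by (simp add: R_def)
  have opn: "\<And>k t. k < n \<Longrightarrow> t \<in> Xs ! k \<longleftrightarrow> (\<exists>b\<in>B - R k. f b = t) \<and> (\<exists>b\<in>R k. f b = t)"
  proof -
    fix k t assume k: "k < n"
    have "Xs ! k = open_pallets f (QG_queues es) (cs ! k)" using k by (simp add: Xs_def n_def)
    then show "t \<in> Xs ! k \<longleftrightarrow> (\<exists>b\<in>B - R k. f b = t) \<and> (\<exists>b\<in>R k. f b = t)"
      using open_char[OF cfgk[OF k], of t] unfolding open_pallets_def R_def B_def f_def by simp
  qed
  have lenX: "length Xs = n" by (simp add: Xs_def n_def)
  have two: "\<And>v. v \<in> V \<Longrightarrow> \<exists>b1 b2. b1 \<in> B \<and> b2 \<in> B \<and> b1 \<noteq> b2 \<and> f b1 = v \<and> f b2 = v"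
    using two_bins[OF deg es] by (simp add: B_def f_def)
  have fV: "\<And>b. b \<in> B \<Longrightarrow> f b \<in> V" using plt_in_V[OF EV es] by (simp add: B_def f_def)
  have XV: "\<And>X. X \<in> set Xs \<Longrightarrow> X \<subseteq> V"
  proof
    fix X t assume "X \<in> set Xs" "t \<in> X"
    then obtain k where k: "k < n" "t \<in> Xs ! k" unfolding in_set_conv_nth lenX by blast
    then obtain b where "b \<in> R k" "f b = t" using opn[of k t] by blast
    then show "t \<in> V" using fV sub[OF k(1)] by blast
  qed
  have VX: "V \<subseteq> \<Union>(set Xs)"
  proof
    fix v assume v: "v \<in> V"
    then obtain b1 b2 where bb: "b1 \<in> B" "b2 \<in> B" "b1 \<noteq> b2" "f b1 = v" "f b2 = v" using two by blast
    have "b1 \<in> R (n - 1)" using Rl bb by simp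
    then obtain k where "k \<le> n - 1" "(\<exists>b\<in>B - R k. f b = v) \<and> (\<exists>b\<in>R k. f b = v)"
      using fwd_open[where n=n and m="n - 1" and b=b1, OF R0 step sub bb] n0 bb by auto
    moreover have "k < n" using \<open>k \<le> n - 1\<close> n0 by linarith
    ultimately have "v \<in> Xs ! k" "k < n" using opn[of k v] by blast+
    then show "v \<in> \<Union>(set Xs)" using lenX by (metis UnionI nth_mem)
  qed
  have arcs: "\<forall>(u, v)\<in>E. \<exists>i j. i \<le> j \<and> j < length Xs \<and> u \<in> Xs ! i \<and> v \<in> Xs ! j"
  proof (clarify)
    fix u v assume uv: "(u, v) \<in> E"
    then obtain i where i: "i < length es" "es ! i = (u, v)" using es by (metis in_set_conv_nth)
    have uV: "u \<in> V" and vV: "v \<in> V" using uv EV by auto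
    have fi: "f (i, 0) = u" "f (i, 1) = v" using i by (auto simp: f_def)
    have "(i, 1) \<in> R (n - 1)" using Rl i by (simp add: B_def Bset_def)
    then obtain k where k: "k < n - 1" "(i, 0) \<in> R k" "(i, 1) \<notin> R k"
      using first_idx[where n=n and bo="(i,1)" and bz="(i,0)" and m="n - 1", OF R0 step] pre n0 by auto
    obtain a1 a2 where aa: "a1 \<in> B" "a2 \<in> B" "a1 \<noteq> a2" "f a1 = u" "f a2 = u" using two uV by blast
    have kn: "k < n" using k(1) by linarith
    have "\<exists>k1\<le>k. (\<exists>b\<in>B - R k1. f b = u) \<and> (\<exists>b\<in>R k1. f b = u)"
      using fwd_open[where n=n and m=k and b="(i,0)", OF R0 step sub aa] kn k(2) fi(1) by blast
    then obtain k1 where k1: "k1 \<le> k" "(\<exists>b\<in>B - R k1. f b = u) \<and> (\<exists>b\<in>R k1. f b = u)" by blast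
    obtain c1 c2 where cc: "c1 \<in> B" "c2 \<in> B" "c1 \<noteq> c2" "f c1 = v" "f c2 = v" using two vV by blast
    have "(i, 1) \<in> B" using i by (simp add: B_def Bset_def)
    then obtain k2 where k2: "k \<le> k2" "k2 < n" "(\<exists>b\<in>B - R k2. f b = v) \<and> (\<exists>b\<in>R k2. f b = v)"
      using bwd_open[where n=n and d="n - 1 - k" and m=k and b="(i,1)", OF Rl n0 step cc] k fi \<open>(i, 1) \<in> B\<close> by auto
    show "\<exists>i j. i \<le> j \<and> j < length Xs \<and> u \<in> Xs ! i \<and> v \<in> Xs ! j"
    proof (rule exI[of _ k1], rule exI[of _ k2], intro conjI)
      show "k1 \<le> k2" using k1 k2 by linarith
      show "k2 < length Xs" using k2 lenX by simp
      show "u \<in> Xs ! k1" using opn[of k1 u] k1 k2 by simp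
      show "v \<in> Xs ! k2" using opn[of k2 v] k2 by simp
    qed
  qed
  have intv: "\<forall>u i j l. i \<le> l \<and> l \<le> j \<and> j < length Xs \<and> u \<in> Xs ! i \<and> u \<in> Xs ! j \<longrightarrow> u \<in> Xs ! l"
  proof (intro allI impI)
    fix u i j l assume h: "i \<le> l \<and> l \<le> j \<and> j < length Xs \<and> u \<in> Xs ! i \<and> u \<in> Xs ! j"
    have ij: "i < n" "l < n" "j < n" using h lenX by auto
    have "R i \<subseteq> R l" "R l \<subseteq> R j" using mono_R[where n=n and R=R, OF step] h ij by auto
    moreover have "(\<exists>b\<in>R i. f b = u)" using h opn[of i u] ij by blast
    moreover have "(\<exists>b\<in>B - R j. f b = u)" using h opn[of j u] ij by blast
    ultimately have "(\<exists>b\<in>B - R l. f b = u) \<and> (\<exists>b\<in>R l. f b = u)" by blast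
    then show "u \<in> Xs ! l" using opn[of l u] ij by blast
  qed
  have dpd: "directed_path_decomposition V E Xs"
  proof -
    have "Xs \<noteq> []" using ne by (simp add: Xs_def)
    moreover have "\<Union>(set Xs) = V" using XV VX by blast
    ultimately show ?thesis
      unfolding directed_path_decomposition_def using XV arcs intv by blast
  qed
  have "Max (card ` set Xs) \<le> p"
  proof (rule Max.boundedI)
    show "finite (card ` set Xs)" by simp
    show "card ` set Xs \<noteq> {}" using ne by (simp add: Xs_def)
    show "\<And>a. a \<in> card ` set Xs \<Longrightarrow> a \<le> p" using U by (auto simp: Xs_def uses_at_most_def f_def)
  qed
  then have "dpd_width Xs \<le> int p - 1" by (simp add: dpd_width_def)
  with dpd show ?thesis by blast
qed

definition gS :: "(nat \<times> nat) set \<Rightarrow> nat \<Rightarrow> nat" where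
  "gS S i = (if (i, 1) \<in> S then 2 else if (i, 0) \<in> S then 1 else 0)"
definition cfg :: "('a \<times> 'a) list \<Rightarrow> (nat \<times> nat) set \<Rightarrow> nat list" where
  "cfg es S = map (gS S) [0..<length es]"

lemma cfg_len[simp]: "length (cfg es S) = length es" by (simp add: cfg_def)
lemma cfg_nth[simp]: "i < length es \<Longrightarrow> cfg es S ! i = gS S i" by (simp add: cfg_def)

lemma cfg_config: "is_config (QG_queues es) (cfg es S)"
  by (simp add: is_config_QG gS_def)

lemma cfg_empty: "cfg es {} = replicate (length es) 0"
  by (rule nth_equalityI) (auto simp: gS_def)

lemma cfg_full: "cfg es (Bset es) = map length (QG_queues es)"
  by (rule nth_equalityI) (auto simp: gS_def Bset_def QG_queues_def)

lemma rem_cfg: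
  assumes "S \<subseteq> Bset es" "\<And>i. (i, 1) \<in> S \<Longrightarrow> (i, 0) \<in> S"
  shows "rem es (cfg es S) = S"
proof
  show "rem es (cfg es S) \<subseteq> S"
  proof
    fix b assume "b \<in> rem es (cfg es S)"
    then obtain i k where b: "b = (i,k)" "i < length es" "k < gS S i" by (auto simp: rem_def)
    then show "b \<in> S" using assms(2)[of i] by (auto simp: gS_def less_Suc_eq numeral_2_eq_2 split: if_splits)
  qed
  show "S \<subseteq> rem es (cfg es S)"
  proof
    fix b assume bS: "b \<in> S"
    then obtain i k where b: "b = (i,k)" "i < length es" "k < 2" using assms(1) by (auto simp: Bset_def)
    then have "k = 0 \<or> k = 1" by auto
    then have "k < gS S i" using bS b by (auto simp: gS_def)
    then show "b \<in> rem es (cfg es S)" using b by (simp add: rem_def)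
  qed
qed

lemma cfg_step0:
  assumes "i < length es" "(i, 0) \<notin> S" "(i, 1) \<notin> S"
  shows "cfg es (insert (i, 0) S) = (cfg es S)[i := Suc (cfg es S ! i)] \<and> cfg es S ! i < 2"
  using assms by (auto intro!: nth_equalityI simp: gS_def nth_list_update)

lemma cfg_step1:
  assumes "i < length es" "(i, 0) \<in> S" "(i, 1) \<notin> S"
  shows "cfg es (insert (i, 1) S) = (cfg es S)[i := Suc (cfg es S ! i)] \<and> cfg es S ! i < 2"
  using assms by (auto intro!: nth_equalityI simp: gS_def nth_list_update)

lemma sorted_before:
  assumes "sorted (map key bs)" "y \<in> set (take m bs)" "x \<in> set bs" "key x < key y"
  shows "x \<in> set (take m bs)"
proof (rule ccontr)
  assume "x \<notin> set (take m bs)"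
  then have "x \<in> set (drop m bs)" using assms(3) by (metis Un_iff append_take_drop_id set_append)
  moreover have "sorted (map key (take m bs) @ map key (drop m bs))"
    using assms(1) by (metis append_take_drop_id map_append)
  ultimately have "key y \<le> key x" using assms(2) by (auto simp: sorted_append)
  then show False using assms(4) by simp
qed

lemma nth_notin_take: "distinct xs \<Longrightarrow> k < length xs \<Longrightarrow> xs ! k \<notin> set (take k xs)"
  by (metis distinct_take take_Suc_conv_app_nth distinct_append Int_iff empty_iff list.set_intros(1) set_append)

lemma dir2:
  assumes fin: "finite V" and EV: "E \<subseteq> V \<times> V" and es: "set es = E"
    and D: "directed_path_decomposition V E Xs" and W: "dpd_width Xs \<le> int p - 1"
  shows "\<exists>cs. is_processing (QG_queues es) cs \<and> uses_at_most (QG_plt es) (QG_queues es) cs p"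
proof -
  define r where "r = length Xs"
  define l where "l = length es"
  define f where "f = QG_plt es"
  define I where "I v = {i. i < r \<and> v \<in> Xs ! i}" for v
  define sv where "sv v = Min (I v)" for v
  define tv where "tv v = Max (I v)" for v
  have Xne: "Xs \<noteq> []" and XsV: "\<And>X. X \<in> set Xs \<Longrightarrow> X \<subseteq> V" and UX: "\<Union>(set Xs) = V"
    and arc: "\<And>u v. (u, v) \<in> E \<Longrightarrow> \<exists>i j. i \<le> j \<and> j < r \<and> u \<in> Xs ! i \<and> v \<in> Xs ! j"
    and itv: "\<And>u i j m. i \<le> m \<Longrightarrow> m \<le> j \<Longrightarrow> j < r \<Longrightarrow> u \<in> Xs ! i \<Longrightarrow> u \<in> Xs ! j \<Longrightarrow> u \<in> Xs ! m"
  proof -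
    note D1 = D[unfolded directed_path_decomposition_def]
    show "Xs \<noteq> []" using D1 by (rule conjunct1)
    show "\<And>X. X \<in> set Xs \<Longrightarrow> X \<subseteq> V" using conjunct1[OF conjunct2[OF D1]] by blast
    show "\<Union>(set Xs) = V" using conjunct1[OF conjunct2[OF conjunct2[OF D1]]] .
    show "\<And>u v. (u, v) \<in> E \<Longrightarrow> \<exists>i j. i \<le> j \<and> j < r \<and> u \<in> Xs ! i \<and> v \<in> Xs ! j"
    proof -
      fix u v assume "(u, v) \<in> E"
      then show "\<exists>i j. i \<le> j \<and> j < r \<and> u \<in> Xs ! i \<and> v \<in> Xs ! j"
        using conjunct1[OF conjunct2[OF conjunct2[OF conjunct2[OF D1]]]] unfolding r_def by fast
    qed
    show "\<And>u i j m. i \<le> m \<Longrightarrow> m \<le> j \<Longrightarrow> j < r \<Longrightarrow> u \<in> Xs ! i \<Longrightarrow> u \<in> Xs ! j \<Longrightarrow> u \<in> Xs ! m"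
      using conjunct2[OF conjunct2[OF conjunct2[OF conjunct2[OF D1]]]] unfolding r_def by metis
  qed
  have Ifin: "finite (I v)" for v by (simp add: I_def)
  have Ine: "I v \<noteq> {}" if vV: "v \<in> V" for v
  proof -
    obtain X where "X \<in> set Xs" "v \<in> X" using UX vV by blast
    then obtain i where "i < r" "Xs ! i = X" by (metis in_set_conv_nth r_def)
    then show ?thesis using \<open>v \<in> X\<close> by (auto simp: I_def)
  qed
  have svI: "sv v \<in> I v" and tvI: "tv v \<in> I v" if "v \<in> V" for v
    using Min_in[OF Ifin Ine[OF that]] Max_in[OF Ifin Ine[OF that]] by (auto simp: sv_def tv_def)
  have svle: "sv v \<le> i" and tvge: "i \<le> tv v" if "i < r" "v \<in> Xs ! i" for v i
    using that Min_le[OF Ifin] Max_ge[OF Ifin] by (auto simp: sv_def tv_def I_def)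
  have tvr: "tv v < r" if "v \<in> V" for v using tvI[OF that] by (simp add: I_def)
  have st: "sv v \<le> tv v" if "v \<in> V" for v using svI[OF that] tvge[of "sv v" v] by (simp add: I_def)
  have inX: "v \<in> Xs ! m" if "v \<in> V" "sv v \<le> m" "m \<le> tv v" for v m
    using itv[of "sv v" m "tv v" v] that svI[OF that(1)] tvI[OF that(1)] by (simp add: I_def)
  have arcst: "sv u \<le> tv v" if uv: "(u, v) \<in> E" for u v
  proof -
    obtain i j where "i \<le> j" "j < r" "u \<in> Xs ! i" "v \<in> Xs ! j" using arc[OF uv] by blast
    then show ?thesis using svle[of i u] tvge[of j v] by simp
  qed
  define key :: "nat \<times> nat \<Rightarrow> nat" where "key b = (if snd b = 0 then 2 * sv (fst (es ! fst b)) else 2 * tv (snd (es ! fst b)) + 1)" for b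
  have fV: "\<And>b. b \<in> Bset es \<Longrightarrow> f b \<in> V" using plt_in_V[OF EV es] by (simp add: f_def)
  have krange: "2 * sv (f b) \<le> key b \<and> key b \<le> 2 * tv (f b) + 1" if "b \<in> Bset es" for b
  proof -
    have v: "f b \<in> V" using fV that .
    show ?thesis using st[OF v] by (cases "snd b = 0") (auto simp: key_def f_def QG_plt_def)
  qed
  have kord: "key (i, 0) < key (i, 1)" if "i < l" for i
  proof -
    have "es ! i \<in> E" using that es by (auto simp: l_def)
    then have "sv (fst (es ! i)) \<le> tv (snd (es ! i))" using arcst by (metis prod.collapse)
    then show ?thesis by (simp add: key_def)
  qed
  define bs where "bs = sort_key key (List.product [0..<l] [0, 1::nat])"
  have setbs: "set bs = Bset es" by (auto simp: bs_def Bset_def l_def)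
  have dbs: "distinct bs" by (simp add: bs_def distinct_product)
  have sbs: "sorted (map key bs)" by (simp add: bs_def)
  define S where "S k = set (take k bs)" for k
  have SB: "S k \<subseteq> Bset es" for k using setbs by (auto simp: S_def dest: in_set_takeD)
  have pre: "(i, 0) \<in> S k" if "(i, 1) \<in> S k" for i k
  proof -
    have "i < l" using SB that by (auto simp: Bset_def l_def)
    moreover have "(i, 0) \<in> set bs" using \<open>i < l\<close> setbs by (auto simp: Bset_def l_def)
    ultimately show ?thesis using sorted_before[OF sbs, of "(i,1)" k "(i,0)"] that kord by (simp add: S_def)
  qed
  define cs where "cs = map (\<lambda>k. cfg es (S k)) [0..<Suc (length bs)]"
  have lencs: "length cs = Suc (length bs)" by (simp add: cs_def)
  have csk: "cs ! k = cfg es (S k)" if "k \<le> length bs" for k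
    using that by (simp add: cs_def nth_append del: upt_Suc)
  have S0: "S 0 = {}" by (simp add: S_def)
  have Sn: "S (length bs) = Bset es" by (simp add: S_def setbs)
  have SSuc: "S (Suc k) = insert (bs ! k) (S k)" if "k < length bs" for k
    using that by (simp add: S_def take_Suc_conv_app_nth)
  have proc: "is_processing (QG_queues es) cs"
    unfolding is_processing_def
  proof (intro conjI allI impI ballI)
    show "cs \<noteq> []" by (simp add: cs_def)
    show "hd cs = replicate (length (QG_queues es)) 0"
      using csk[of 0] S0 cfg_empty[of es] by (simp add: hd_conv_nth cs_def del: upt_Suc)
    show "last cs = map length (QG_queues es)"
      using csk[of "length bs"] Sn cfg_full[of es] lencs
      by (metis last_conv_nth diff_Suc_1 le_refl list.size(3) nat.simps(3))
    show "is_config (QG_queues es) c" if "c \<in> set cs" for c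
      using that cfg_config by (auto simp: cs_def)
    fix k assume "Suc k < length cs"
    then have k: "k < length bs" using lencs by simp
    have bk: "bs ! k \<in> Bset es" using k setbs nth_mem by blast
    then obtain i j where ij: "bs ! k = (i, j)" "i < l" "j < 2" by (auto simp: Bset_def l_def)
    have nin: "(i, j) \<notin> S k" using nth_notin_take[OF dbs k] ij by (simp add: S_def)
    have ss: "S (Suc k) = insert (i, j) (S k)" using SSuc[OF k] ij by simp
    have "cfg es (S (Suc k)) = (cfg es (S k))[i := Suc (cfg es (S k) ! i)] \<and> cfg es (S k) ! i < 2"
    proof (cases "j = 0")
      case True
      have "(i, 1) \<notin> S k" using pre nin True by blast
      then show ?thesis using cfg_step0[of i es "S k"] ss nin True ij by (simp add: l_def)
    next
      case False
      then have j1: "j = 1" using ij by simp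
      have "(i, 1) \<in> S (Suc k)" using ss j1 by simp
      then have "(i, 0) \<in> S (Suc k)" using pre by blast
      then have "(i, 0) \<in> S k" using ss j1 by simp
      then show ?thesis using cfg_step1[of i es "S k"] ss nin j1 ij by (simp add: l_def)
    qed
    then show "trans_step (QG_queues es) (cs ! k) (cs ! Suc k)"
      unfolding trans_step_def using csk[of k] csk[of "Suc k"] k ij by (auto simp: l_def)
  qed
  have Mp: "Max (card ` set Xs) \<le> p" using W by (simp add: dpd_width_def)
  have finX: "finite (Xs ! m)" if "m < r" for m
    using XsV[of "Xs ! m"] that fin by (simp add: r_def finite_subset)
  have bound: "card (open_pallets f (QG_queues es) (cfg es (S k))) \<le> p" for k
  proof -
    have pre': "\<And>i. (i, 1) \<in> S k \<Longrightarrow> (i, 0) \<in> S k" using pre by blast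
    have OP: "open_pallets f (QG_queues es) (cfg es (S k)) =
       {t. (\<exists>b\<in>Bset es - S k. f b = t) \<and> (\<exists>b\<in>S k. f b = t)}"
    proof -
      have "\<And>t. pallet_open (QG_plt es) (QG_queues es) (cfg es (S k)) t \<longleftrightarrow>
        (\<exists>b\<in>Bset es - S k. QG_plt es b = t) \<and> (\<exists>b\<in>S k. QG_plt es b = t)"
        using open_char[OF cfg_config[of es "S k"]] rem_cfg[OF SB pre'] by simp
      then show ?thesis by (simp add: open_pallets_def f_def)
    qed
    show ?thesis
    proof (cases "S k = {}")
      case True
      then show ?thesis using OP by simp
    next
      case False
      have finS: "finite (S k)" by (simp add: S_def)
      define K where "K = Max (key ` S k)"
      have "K \<in> key ` S k" unfolding K_def using finS False by (intro Max_in) auto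
      then obtain b0 where b0: "b0 \<in> S k" "key b0 = K" by auto
      have b0B: "b0 \<in> Bset es" using b0 SB by blast
      have "K \<le> 2 * tv (f b0) + 1" using krange[OF b0B] b0 by simp
      moreover have "tv (f b0) < r" using tvr fV[OF b0B] by blast
      ultimately have mr: "K div 2 < r" by linarith
      have sub: "open_pallets f (QG_queues es) (cfg es (S k)) \<subseteq> Xs ! (K div 2)"
      proof
        fix t assume "t \<in> open_pallets f (QG_queues es) (cfg es (S k))"
        then obtain b1 b2 where b1: "b1 \<in> S k" "f b1 = t" and b2: "b2 \<in> Bset es - S k" "f b2 = t"
          using OP by blast
        have b1B: "b1 \<in> Bset es" using b1 SB by blast
        have tV: "t \<in> V" using fV b1B b1 by blast
        have "key b1 \<le> K" using b1 finS by (simp add: K_def)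
        moreover have "K \<le> key b2"
        proof (rule ccontr)
          assume "\<not> K \<le> key b2"
          then have "b2 \<in> S k" using sorted_before[OF sbs, of b0 k b2] b0 b2 setbs by (simp add: S_def)
          then show False using b2 by blast
        qed
        moreover have "2 * sv t \<le> key b1" using krange[OF b1B] b1 by simp
        moreover have "key b2 \<le> 2 * tv t + 1" using krange[of b2] b2 by simp
        ultimately have "sv t \<le> K div 2" "K div 2 \<le> tv t" by linarith+
        then show "t \<in> Xs ! (K div 2)" using inX tV by blast
      qed
      have "card (open_pallets f (QG_queues es) (cfg es (S k))) \<le> card (Xs ! (K div 2))"
        using card_mono[OF finX[OF mr] sub] .
      also have "\<dots> \<le> Max (card ` set Xs)"
        using mr by (intro Max_ge) (auto simp: r_def)
      finally show ?thesis using Mp by linarith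
    qed
  qed
  have "uses_at_most (QG_plt es) (QG_queues es) cs p"
    unfolding uses_at_most_def f_def[symmetric]
  proof
    fix c assume "c \<in> set cs"
    then obtain k where "c = cfg es (S k)" by (auto simp: cs_def)
    then show "card (open_pallets f (QG_queues es) c) \<le> p" using bound by simp
  qed
  with proc show ?thesis by blast
qed

theorem lemma4:
  fixes V :: "'a set" and E :: "('a \<times> 'a) set" and es :: "('a \<times> 'a) list" and p :: nat
  assumes "finite V"
    and "E \<subseteq> V \<times> V"
    and "\<forall>v. (v, v) \<notin> E"
    and "\<forall>v\<in>V. (\<exists>u. (u, v) \<in> E) \<and> (\<exists>w. (v, w) \<in> E)"
    and "distinct es" and "set es = E"
    and "p > 0"
  shows "(\<exists>Xs. directed_path_decomposition V E Xs \<and> dpd_width Xs \<le> int p - 1) \<longleftrightarrow>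
         (\<exists>cs. is_processing (QG_queues es) cs \<and> uses_at_most (QG_plt es) (QG_queues es) cs p)"
proof
  assume "\<exists>Xs. directed_path_decomposition V E Xs \<and> dpd_width Xs \<le> int p - 1"
  then obtain Xs where "directed_path_decomposition V E Xs" "dpd_width Xs \<le> int p - 1" by blast
  then show "\<exists>cs. is_processing (QG_queues es) cs \<and> uses_at_most (QG_plt es) (QG_queues es) cs p"
    using dir2[OF assms(1,2,6)] by blast
next
  assume "\<exists>cs. is_processing (QG_queues es) cs \<and> uses_at_most (QG_plt es) (QG_queues es) cs p"
  then obtain cs where "is_processing (QG_queues es) cs" "uses_at_most (QG_plt es) (QG_queues es) cs p" by blast
  then show "\<exists>Xs. directed_path_decomposition V E Xs \<and> dpd_width Xs \<le> int p - 1"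
    using dir1[OF assms(2,4,6)] by blast
qed

end
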